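(* Let $H=\mathbb{C}^n$, let $V\subset H$ be a real linear subspace, and let $\mathcal{F}=\{f_1,\ldots,f_m\}\subset H$ be a frame for $V$. The following statements are equivalent: (1) $\mathcal{F}$ is phase retrievable with respect to $V$; (2) $\ker\mathbb{A}\cap\big(\mathcal{S}^{1,0}(V)-\mathcal{S}^{1,0}(V)\big)=\{0\}$, where $\mathcal{S}^{1,0}(V)-\mathcal{S}^{1,0}(V)=\{xx^*-yy^*:\ x,y\in V\}$; (3) $\ker\mathbb{A}\cap\mathcal{S}^{1,1}(V)=\{0\}$; (4) $\ker\mathbb{A}\cap\big(\mathcal{S}^{2,0}(V)\cup\mathcal{S}^{1,1}(V)\cup\mathcal{S}^{0,2}(V)\big)=\{0\}$; (5) there do not exist vectors $u,v\in V$ with $[\![u,v]\!]\neq 0$ such that $\operatorname{Re}\big(\langle u,f_k\rangle\langle f_k,v\rangle\big)=0$ for all $1\le k\le m$.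
   Context: The inner product on $\mathbb{C}^n$ is $\langle x,y\rangle=\sum_j x_j\overline{y_j}$ (linear in the first argument), and $x^*$ denotes the conjugate transpose. $\mathcal{F}$ is a frame for $V$ if there is $A>0$ with $\sum_{k=1}^m|\langle x,f_k\rangle|^2\ge A\|x\|^2$ for all $x\in V$. Two vectors $x,y\in H$ are equivalent, $x\sim y$, if $x=cy$ for some $c\in\mathbb{C}$ with $|c|=1$. Define $\alpha(x)=(|\langle x,f_k\rangle|)_{k=1}^m\in\mathbb{R}^m$. $\mathcal{F}$ is phase retrievable with respect to $V$ if for all $x,y\in V$, $\alpha(x)=\alpha(y)$ implies $x\sim y$. $\operatorname{Sym}(\mathbb{C}^n)$ is the real vector space of self-adjoint $n\times n$ complex matrices with inner product $\langle T,S\rangle_{HS}=\operatorname{trace}(TS)$. For $u,v\in\mathbb{C}^n$, $[\![u,v]\!]=\frac12(uv^*+vu^* )\in\operatorname{Sym}(\mathbb{C}^n)$. The linear map $\mathbb{A}:\operatorname{Sym}(\mathbb{C}^n)\to\mathbb{R}^m$ is $(\mathbb{A}(T))_k=\langle Tf_k,f_k\rangle=\operatorname{trace}(T f_kf_k^* )$. As subsets of $\operatorname{Sym}(\mathbb{C}^n)$: $\mathcal{S}^{1,0}(V)=\{xx^*: x\in V\}$, $\mathcal{S}^{1,1}(V)=\{[\![u,v]\!]: u,v\in V\}$, $\mathcal{S}^{2,0}(V)=\{uu^*+vv^*: u,v\in V\}$, $\mathcal{S}^{0,2}(V)=\{-uu^*-vv^*: u,v\in V\}$. *)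

theory Defs
  imports "HOL-Analysis.Analysis"
begin

text \<open>A real linear subspace V is HOL-Analysis subspace (real scalars, since complex^'n is a
  real vector space).\<close>

definition cinner :: "complex ^ 'n \<Rightarrow> complex ^ 'n \<Rightarrow> complex" where
  "cinner x y = (\<Sum>j\<in>UNIV. x $ j * cnj (y $ j))"

definition is_frame :: "(complex ^ 'n) set \<Rightarrow> (nat \<Rightarrow> complex ^ 'n) \<Rightarrow> nat \<Rightarrow> bool" where
  "is_frame V f m \<longleftrightarrow>
     (\<exists>A>0. \<forall>x\<in>V. (\<Sum>k=1..m. (cmod (cinner x (f k)))\<^sup>2) \<ge> A * (norm x)\<^sup>2)"

definition equiv_vec :: "complex ^ 'n \<Rightarrow> complex ^ 'n \<Rightarrow> bool" where
  "equiv_vec x y \<longleftrightarrow> (\<exists>c. cmod c = 1 \<and> x = c *s y)"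

definition phase_retrievable :: "(complex ^ 'n) set \<Rightarrow> (nat \<Rightarrow> complex ^ 'n) \<Rightarrow> nat \<Rightarrow> bool" where
  "phase_retrievable V f m \<longleftrightarrow>
     (\<forall>x\<in>V. \<forall>y\<in>V. (\<forall>k\<in>{1..m}. cmod (cinner x (f k)) = cmod (cinner y (f k))) \<longrightarrow> equiv_vec x y)"

definition self_adjoint :: "complex ^ 'n ^ 'n \<Rightarrow> bool" where
  "self_adjoint T \<longleftrightarrow> (\<forall>i j. T $ i $ j = cnj (T $ j $ i))"

definition Sym :: "(complex ^ 'n ^ 'n) set" where
  "Sym = {T. self_adjoint T}"

definition outer :: "complex ^ 'n \<Rightarrow> complex ^ 'n \<Rightarrow> complex ^ 'n ^ 'n" where
  "outer u v = (\<chi> i j. u $ i * cnj (v $ j))"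

definition sbr :: "complex ^ 'n \<Rightarrow> complex ^ 'n \<Rightarrow> complex ^ 'n ^ 'n" where
  "sbr u v = (1/2 :: real) *\<^sub>R (outer u v + outer v u)"

text \<open>(A T)_k = <T f_k, f_k>, a real number for self-adjoint T\<close>
definition opA :: "(nat \<Rightarrow> complex ^ 'n) \<Rightarrow> complex ^ 'n ^ 'n \<Rightarrow> nat \<Rightarrow> real" where
  "opA f T k = Re (cinner (T *v f k) (f k))"

definition kerA :: "(nat \<Rightarrow> complex ^ 'n) \<Rightarrow> nat \<Rightarrow> (complex ^ 'n ^ 'n) set" where
  "kerA f m = {T \<in> Sym. \<forall>k\<in>{1..m}. opA f T k = 0}"

definition S10 :: "(complex ^ 'n) set \<Rightarrow> (complex ^ 'n ^ 'n) set" where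
  "S10 V = {outer x x | x. x \<in> V}"

definition S11 :: "(complex ^ 'n) set \<Rightarrow> (complex ^ 'n ^ 'n) set" where
  "S11 V = {sbr u v | u v. u \<in> V \<and> v \<in> V}"

definition S20 :: "(complex ^ 'n) set \<Rightarrow> (complex ^ 'n ^ 'n) set" where
  "S20 V = {outer u u + outer v v | u v. u \<in> V \<and> v \<in> V}"

definition S02 :: "(complex ^ 'n) set \<Rightarrow> (complex ^ 'n ^ 'n) set" where
  "S02 V = {- outer u u - outer v v | u v. u \<in> V \<and> v \<in> V}"

definition S10_diff :: "(complex ^ 'n) set \<Rightarrow> (complex ^ 'n ^ 'n) set" where
  "S10_diff V = {X - Y | X Y. X \<in> S10 V \<and> Y \<in> S10 V}"

end

theory Submission
  imports Defs
begin

lemma cinner_outer: "cinner (outer u v *v w) z = cinner u z * cinner w v"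
  unfolding cinner_def outer_def matrix_vector_mult_def
  apply (simp add: sum_product sum_distrib_left sum_distrib_right mult_ac)
  apply (rule sum.swap)
  done

lemma mv_add: "(A + B) *v x = A *v x + B *v (x :: complex^'n)"
  unfolding matrix_vector_mult_def by (simp add: vec_eq_iff algebra_simps sum.distrib)
lemma mv_diff: "(A - B) *v x = A *v x - B *v (x :: complex^'n)"
  unfolding matrix_vector_mult_def by (simp add: vec_eq_iff algebra_simps sum_subtractf)
lemma mv_neg: "(- A) *v x = - (A *v (x :: complex^'n))"
  unfolding matrix_vector_mult_def by (simp add: vec_eq_iff sum_negf)
lemma mv_scaleR: "(r *\<^sub>R A) *v x = r *\<^sub>R (A *v (x :: complex^'n))"
  unfolding matrix_vector_mult_def by (simp add: vec_eq_iff scaleR_sum_right)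

lemma cinner_add: "cinner (a + b) z = cinner a z + cinner b z"
  unfolding cinner_def by (simp add: algebra_simps sum.distrib)
lemma cinner_diff: "cinner (a - b) z = cinner a z - cinner b z"
  unfolding cinner_def by (simp add: algebra_simps sum_subtractf)
lemma cinner_neg: "cinner (- a) z = - cinner a z"
  unfolding cinner_def by (simp add: sum_negf)
lemma cinner_scaleR: "cinner (r *\<^sub>R a) z = of_real r * cinner a z"
  unfolding cinner_def by (simp add: scaleR_conv_of_real[where 'a=complex] sum_distrib_left mult_ac)
lemma cinner_sym: "cinner w x = cnj (cinner x w)"
  unfolding cinner_def by (simp add: mult.commute)

lemma opA_add: "opA f (A + B) k = opA f A k + opA f B k"
  unfolding opA_def by (simp add: mv_add cinner_add)
lemma opA_diff: "opA f (A - B) k = opA f A k - opA f B k"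
  unfolding opA_def by (simp add: mv_diff cinner_diff)
lemma opA_neg: "opA f (- A) k = - opA f A k"
  unfolding opA_def by (simp add: mv_neg cinner_neg)

lemma opA_outer: "opA f (outer x x) k = (cmod (cinner x (f k)))\<^sup>2"
proof -
  have "cinner x (f k) * cinner (f k) x = of_real ((cmod (cinner x (f k)))\<^sup>2)"
    by (subst cinner_sym[of "f k" x]) (rule complex_norm_square[symmetric])
  then show ?thesis unfolding opA_def cinner_outer by simp
qed

lemma opA_sbr: "opA f (sbr u v) k = Re (cinner u (f k) * cinner (f k) v)"
proof -
  have "opA f (sbr u v) k = (1/2) * (Re (cinner u (f k) * cinner (f k) v) + Re (cinner v (f k) * cinner (f k) u))"
    unfolding opA_def sbr_def mv_scaleR cinner_scaleR mv_add cinner_add cinner_outer by simp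
  also have "Re (cinner v (f k) * cinner (f k) u) = Re (cinner u (f k) * cinner (f k) v)"
  proof -
    have "cinner v (f k) * cinner (f k) u = cnj (cinner u (f k) * cinner (f k) v)"
      by (simp only: cinner_sym[of v "f k"] cinner_sym[of "f k" u] complex_cnj_mult mult.commute)
    then show ?thesis by simp
  qed
  finally show ?thesis by simp
qed

lemma sbr_nth: "sbr u v $ i $ j = (u$i * cnj (v$j) + v$i * cnj (u$j)) / 2"
  unfolding sbr_def outer_def by (simp add: scaleR_conv_of_real[where 'a=complex])

lemma aux: "(a::complex) * cnj b - c * cnj d = ((a + c) * cnj (b - d) + (a - c) * cnj (b + d)) / 2"
  by (simp add: field_simps)

lemma diff_sbr: "outer x x - outer y y = sbr (x + y) (x - y)"
proof (subst vec_eq_iff, intro allI, subst vec_eq_iff, intro allI)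
  fix i j
  have "(outer x x - outer y y) $ i $ j = x$i*cnj(x$j) - y$i*cnj(y$j)" by (simp add: outer_def)
  also have "\<dots> = sbr (x+y) (x-y) $ i $ j"
    by (simp only: sbr_nth vector_add_component vector_minus_component aux)
  finally show "(outer x x - outer y y) $ i $ j = sbr (x+y) (x-y) $ i $ j" .
qed

lemma halves1: "(1/2::real) *\<^sub>R (u+v) + (1/2::real) *\<^sub>R (u-v) = (u::'a::real_vector)"
proof -
  have "(1/2::real) *\<^sub>R (u+v) + (1/2::real) *\<^sub>R (u-v) = (1/2::real) *\<^sub>R (2 *\<^sub>R u)"
    by (simp only: scaleR_add_right[symmetric] scaleR_2) (simp add: algebra_simps)
  then show ?thesis by simp
qed
lemma halves2: "(1/2::real) *\<^sub>R (u+v) - (1/2::real) *\<^sub>R (u-v) = (v::'a::real_vector)"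
proof -
  have "(1/2::real) *\<^sub>R (u+v) - (1/2::real) *\<^sub>R (u-v) = (1/2::real) *\<^sub>R (2 *\<^sub>R v)"
    by (simp only: scaleR_diff_right[symmetric] scaleR_2) (simp add: algebra_simps)
  then show ?thesis by simp
qed
lemmas halves = halves1 halves2

lemma sbr_diff: "sbr u v = outer ((1/2::real) *\<^sub>R (u+v)) ((1/2::real) *\<^sub>R (u+v)) - outer ((1/2::real) *\<^sub>R (u-v)) ((1/2::real) *\<^sub>R (u-v))"
  unfolding diff_sbr halves ..

lemma outer_scale: "cmod c = 1 \<Longrightarrow> outer (c *s y) (c *s y) = outer y y"
proof -
  assume "cmod c = 1"
  then have c: "c * cnj c = 1" using complex_norm_square[of c] by simp
  have "c * y$i * cnj (c * y$j) = (c * cnj c) * (y$i * cnj (y$j))" for i j by (simp add: mult_ac)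
  then show ?thesis unfolding outer_def vec_eq_iff vector_scalar_mult_def using c by simp
qed

lemma outer_eq: "outer x x = outer y y \<Longrightarrow> equiv_vec x y"
proof -
  assume h: "outer x x = outer y y"
  have hij: "x$i * cnj (x$j) = y$i * cnj (y$j)" for i j
  proof -
    have "outer x x $ i $ j = outer y y $ i $ j" using h by simp
    then show ?thesis by (simp add: outer_def)
  qed
  show ?thesis
  proof (cases "y = 0")
    case True
    then have "x$i * cnj (x$i) = 0" for i using hij[of i i] by simp
    then have "x = 0" by (simp add: vec_eq_iff)
    then show ?thesis using True unfolding equiv_vec_def by (intro exI[of _ 1]) simp
  next
    case False
    then obtain j where yj: "y$j \<noteq> 0" by (auto simp: vec_eq_iff)
    have "(of_real ((cmod (x$j))\<^sup>2) :: complex) = of_real ((cmod (y$j))\<^sup>2)"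
      by (simp only: complex_norm_square hij)
    then have n: "(cmod (x$j))\<^sup>2 = (cmod (y$j))\<^sup>2" by (simp only: of_real_eq_iff)
    then have nm: "cmod (x$j) = cmod (y$j)" by (simp add: power2_eq_iff_nonneg)
    with yj have xj: "x$j \<noteq> 0" by auto
    then have cxj: "cnj (x$j) \<noteq> 0" by simp
    define c where "c = cnj (y$j) / cnj (x$j)"
    have "cmod c = cmod (y$j) / cmod (x$j)" unfolding c_def by (simp only: norm_divide complex_mod_cnj)
    then have "cmod c = 1" using nm xj yj by simp
    moreover have "x = c *s y"
      unfolding vec_eq_iff vector_scalar_mult_def
    proof
      fix i
      have "x$i = x$i * cnj (x$j) / cnj (x$j)" using cxj by simp
      also have "\<dots> = y$i * cnj (y$j) / cnj (x$j)" by (simp only: hij)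
      also have "\<dots> = c * y$i" unfolding c_def by simp
      finally show "x $ i = (\<chi> k. c * y $ k) $ i" by simp
    qed
    ultimately show ?thesis unfolding equiv_vec_def by blast
  qed
qed

lemma sbr_Sym: "sbr u v \<in> Sym"
  unfolding Sym_def self_adjoint_def by (simp add: sbr_nth algebra_simps)
lemma outer_Sym: "outer u u \<in> Sym"
  unfolding Sym_def self_adjoint_def outer_def by (simp add: algebra_simps)

lemma frame_zero:
  assumes fr: "is_frame V f m" and u: "u \<in> V"
    and z: "\<forall>k\<in>{1..m}. cinner u (f k) = 0"
  shows "u = 0"
proof -
  obtain A where A: "A > 0" "\<forall>x\<in>V. (\<Sum>k=1..m. (cmod (cinner x (f k)))\<^sup>2) \<ge> A * (norm x)\<^sup>2"
    using fr unfolding is_frame_def by blast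
  have s0: "(\<Sum>k=1..m. (cmod (cinner u (f k)))\<^sup>2) = 0" using z by simp
  have "A * (norm u)\<^sup>2 \<le> 0" using A(2) u s0 by metis
  with A(1) have "(norm u)\<^sup>2 \<le> 0" by (simp add: mult_le_0_iff)
  then show ?thesis by simp
qed

lemma S20_ker:
  assumes fr: "is_frame V f m" and u: "u \<in> V" and v: "v \<in> V"
    and z: "\<forall>k\<in>{1..m}. opA f (outer u u + outer v v) k = 0"
  shows "u = 0 \<and> v = 0"
proof -
  have "\<forall>k\<in>{1..m}. (cmod (cinner u (f k)))\<^sup>2 + (cmod (cinner v (f k)))\<^sup>2 = 0"
    using z by (simp add: opA_add opA_outer)
  then have "\<forall>k\<in>{1..m}. cinner u (f k) = 0 \<and> cinner v (f k) = 0"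
    by (simp add: add_nonneg_eq_0_iff)
  then show ?thesis using frame_zero[OF fr u] frame_zero[OF fr v] by blast
qed

theorem theorem3p1:
  fixes V :: "(complex ^ 'n) set" and f :: "nat \<Rightarrow> complex ^ 'n" and m :: nat
  assumes "subspace V"
    and "is_frame V f m"
  shows "(phase_retrievable V f m \<longleftrightarrow> kerA f m \<inter> S10_diff V = {0})
       \<and> (phase_retrievable V f m \<longleftrightarrow> kerA f m \<inter> S11 V = {0})
       \<and> (phase_retrievable V f m \<longleftrightarrow> kerA f m \<inter> (S20 V \<union> S11 V \<union> S02 V) = {0})
       \<and> (phase_retrievable V f m \<longleftrightarrow>
            \<not> (\<exists>u\<in>V. \<exists>v\<in>V. sbr u v \<noteq> 0 \<and>
                  (\<forall>k\<in>{1..m}. Re (cinner u (f k) * cinner (f k) v) = 0)))"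
proof -
  note sV = assms(1) and fr = assms(2)
  have V0: "0 \<in> V" using sV by (rule subspace_0)
  have Vadd: "x + y \<in> V" if "x \<in> V" "y \<in> V" for x y using sV that by (rule subspace_add)
  have Vdiff: "x - y \<in> V" if "x \<in> V" "y \<in> V" for x y using sV that by (rule subspace_diff)
  have Vscale: "c *\<^sub>R x \<in> V" if "x \<in> V" for x c using sV that by (rule subspace_scale)
  have sbr00: "sbr 0 0 = 0" by (simp add: vec_eq_iff sbr_nth)
  have ker0: "(0 :: complex^'n^'n) \<in> kerA f m"
    unfolding kerA_def Sym_def self_adjoint_def opA_def cinner_def matrix_vector_mult_def by simp
  have kersbr: "sbr u v \<in> kerA f m \<longleftrightarrow> (\<forall>k\<in>{1..m}. Re (cinner u (f k) * cinner (f k) v) = 0)" for u v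
    unfolding kerA_def using sbr_Sym[of u v] by (simp add: opA_sbr)
  define K where "K \<longleftrightarrow> (\<forall>u\<in>V. \<forall>v\<in>V. sbr u v \<in> kerA f m \<longrightarrow> sbr u v = 0)"
  have S11eq: "S10_diff V = S11 V"
  proof
    show "S10_diff V \<subseteq> S11 V"
    proof
      fix T assume "T \<in> S10_diff V"
      then obtain X Y where XY: "T = X - Y" "X \<in> S10 V" "Y \<in> S10 V" unfolding S10_diff_def by blast
      obtain x where x: "X = outer x x" "x \<in> V" using XY(2) unfolding S10_def by blast
      obtain y where y: "Y = outer y y" "y \<in> V" using XY(3) unfolding S10_def by blast
      have "T = sbr (x+y) (x-y)" using XY(1) x(1) y(1) diff_sbr by simp
      moreover have "x + y \<in> V" "x - y \<in> V" using Vadd Vdiff x(2) y(2) by auto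
      ultimately show "T \<in> S11 V" unfolding S11_def by blast
    qed
    show "S11 V \<subseteq> S10_diff V"
    proof
      fix T assume "T \<in> S11 V"
      then obtain u v where uv: "u \<in> V" "v \<in> V" "T = sbr u v" unfolding S11_def by blast
      define x where "x = (1/2::real) *\<^sub>R (u+v)"
      define y where "y = (1/2::real) *\<^sub>R (u-v)"
      have xy: "x \<in> V" "y \<in> V" unfolding x_def y_def using uv Vadd Vdiff Vscale by auto
      have "outer x x \<in> S10 V" "outer y y \<in> S10 V" unfolding S10_def using xy by blast+
      moreover have "T = outer x x - outer y y" using uv(3) sbr_diff[of u v] unfolding x_def y_def by simp
      ultimately show "T \<in> S10_diff V" unfolding S10_diff_def by blast
    qed
  qed
  have i3: "kerA f m \<inter> S11 V = {0} \<longleftrightarrow> K"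
  proof
    assume h: "kerA f m \<inter> S11 V = {0}"
    show K unfolding K_def
    proof (intro ballI impI)
      fix u v assume "u \<in> V" "v \<in> V" "sbr u v \<in> kerA f m"
      then have "sbr u v \<in> kerA f m \<inter> S11 V" unfolding S11_def by blast
      then show "sbr u v = 0" using h by blast
    qed
  next
    assume K
    have "0 \<in> S11 V" unfolding S11_def using V0 sbr00 by force
    moreover have "kerA f m \<inter> S11 V \<subseteq> {0}"
    proof
      fix T assume T: "T \<in> kerA f m \<inter> S11 V"
      then obtain u v where uv: "u \<in> V" "v \<in> V" "T = sbr u v" unfolding S11_def by blast
      then have "sbr u v \<in> kerA f m" using T by simp
      then have "sbr u v = 0" using \<open>K\<close> uv(1,2) unfolding K_def by blast
      then show "T \<in> {0}" using uv(3) by simp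
    qed
    ultimately show "kerA f m \<inter> S11 V = {0}" using ker0 by blast
  qed
  have i5: "(\<not> (\<exists>u\<in>V. \<exists>v\<in>V. sbr u v \<noteq> 0 \<and>
                  (\<forall>k\<in>{1..m}. Re (cinner u (f k) * cinner (f k) v) = 0))) \<longleftrightarrow> K"
    unfolding K_def kersbr by auto
  have S20k: "kerA f m \<inter> S20 V \<subseteq> {0}"
  proof
    fix T assume T: "T \<in> kerA f m \<inter> S20 V"
    then obtain u v where uv: "u \<in> V" "v \<in> V" "T = outer u u + outer v v" unfolding S20_def by blast
    have "\<forall>k\<in>{1..m}. opA f (outer u u + outer v v) k = 0" using T uv unfolding kerA_def by blast
    then have "u = 0 \<and> v = 0" using S20_ker[OF fr uv(1,2)] by blast
    then show "T \<in> {0}" using uv by (simp add: outer_def vec_eq_iff)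
  qed
  have S02k: "kerA f m \<inter> S02 V \<subseteq> {0}"
  proof
    fix T assume T: "T \<in> kerA f m \<inter> S02 V"
    then obtain u v where uv: "u \<in> V" "v \<in> V" "T = - outer u u - outer v v" unfolding S02_def by blast
    have "\<forall>k\<in>{1..m}. opA f (- outer u u - outer v v) k = 0" using T uv unfolding kerA_def by blast
    then have "\<forall>k\<in>{1..m}. opA f (outer u u + outer v v) k = 0" by (simp add: opA_add opA_diff opA_neg) (metis add.commute add_eq_0_iff)
    then have "u = 0 \<and> v = 0" using S20_ker[OF fr uv(1,2)] by blast
    then show "T \<in> {0}" using uv by (simp add: outer_def vec_eq_iff)
  qed
  have i4: "kerA f m \<inter> (S20 V \<union> S11 V \<union> S02 V) = {0} \<longleftrightarrow> K"
  proof -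
    have z11: "0 \<in> S11 V" unfolding S11_def using V0 sbr00 by force
    have "kerA f m \<inter> (S20 V \<union> S11 V \<union> S02 V) = {0} \<longleftrightarrow> kerA f m \<inter> S11 V = {0}"
    proof
      assume h: "kerA f m \<inter> (S20 V \<union> S11 V \<union> S02 V) = {0}"
      have sub: "kerA f m \<inter> S11 V \<subseteq> kerA f m \<inter> (S20 V \<union> S11 V \<union> S02 V)" by blast
      have "kerA f m \<inter> S11 V \<subseteq> {0}" using sub unfolding h .
      moreover have "{0} \<subseteq> kerA f m \<inter> S11 V" using z11 ker0 by simp
      ultimately show "kerA f m \<inter> S11 V = {0}" by (rule subset_antisym)
    next
      assume h: "kerA f m \<inter> S11 V = {0}"
      have "kerA f m \<inter> (S20 V \<union> S11 V \<union> S02 V) \<subseteq> {0}"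
      proof
        fix T assume T: "T \<in> kerA f m \<inter> (S20 V \<union> S11 V \<union> S02 V)"
        then have "T \<in> kerA f m \<inter> S20 V \<or> T \<in> kerA f m \<inter> S11 V \<or> T \<in> kerA f m \<inter> S02 V" by blast
        then show "T \<in> {0}" using S20k S02k h by blast
      qed
      moreover have "{0} \<subseteq> kerA f m \<inter> (S20 V \<union> S11 V \<union> S02 V)" using z11 ker0 by simp
      ultimately show "kerA f m \<inter> (S20 V \<union> S11 V \<union> S02 V) = {0}" by (rule subset_antisym)
    qed
    then show ?thesis using i3 by simp
  qed
  have i1: "phase_retrievable V f m \<longleftrightarrow> K"
  proof
    assume P: "phase_retrievable V f m"
    show K unfolding K_def
    proof (intro ballI impI)
      fix u v assume uv: "u \<in> V" "v \<in> V" and k: "sbr u v \<in> kerA f m"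
      define x where "x = (1/2::real) *\<^sub>R (u+v)"
      define y where "y = (1/2::real) *\<^sub>R (u-v)"
      have xy: "x \<in> V" "y \<in> V" unfolding x_def y_def using uv Vadd Vdiff Vscale by auto
      have e: "sbr u v = outer x x - outer y y" unfolding x_def y_def by (rule sbr_diff)
      have "\<forall>k\<in>{1..m}. cmod (cinner x (f k)) = cmod (cinner y (f k))"
      proof
        fix j assume "j \<in> {1..m}"
        then have "opA f (outer x x - outer y y) j = 0" using k e unfolding kerA_def by auto
        then have "(cmod (cinner x (f j)))\<^sup>2 = (cmod (cinner y (f j)))\<^sup>2" by (simp add: opA_diff opA_outer)
        then show "cmod (cinner x (f j)) = cmod (cinner y (f j))" by (simp add: power2_eq_iff_nonneg)
      qed
      then have "equiv_vec x y" using P xy unfolding phase_retrievable_def by blast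
      then obtain c where c: "cmod c = 1" "x = c *s y" unfolding equiv_vec_def by blast
      show "sbr u v = 0" using e c outer_scale by simp
    qed
  next
    assume K
    show "phase_retrievable V f m" unfolding phase_retrievable_def
    proof (intro ballI impI)
      fix x y assume xy: "x \<in> V" "y \<in> V"
        and h: "\<forall>k\<in>{1..m}. cmod (cinner x (f k)) = cmod (cinner y (f k))"
      have "sbr (x+y) (x-y) \<in> kerA f m"
        unfolding kerA_def using sbr_Sym[of "x+y" "x-y"] h by (simp add: diff_sbr[symmetric] opA_diff opA_outer del: sbr_Sym)
      then have "sbr (x+y) (x-y) = 0" using \<open>K\<close> Vadd Vdiff xy unfolding K_def by blast
      then have "outer x x = outer y y" by (simp add: diff_sbr[symmetric])
      then show "equiv_vec x y" by (rule outer_eq)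
    qed
  qed
  show ?thesis using i1 i3 i4 i5 S11eq by simp
qed

end
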